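(* Let $R$ be an associative ring with identity and $M$ a left $R$-module that is projective in $\sigma[M]$. Then: (1) $\Lambda(M)$, with the product $N_ML$, is a quasi-quantale; in fact $(\sum_{i\in I}N_i)_ML=\sum_{i\in I}(N_{i\,M}L)$ for every family $\{N_i\}_{i\in I}\subseteq\Lambda(M)$ and every $L\in\Lambda(M)$. (2) $\Lambda^{fi}(M)$ is a right-unital subquasi-quantale of $\Lambda(M)$: it is closed under arbitrary sums and under the product, and $N_MM=N$ for all $N\in\Lambda^{fi}(M)$.
   Context: $\Lambda(M)$ is the complete lattice of submodules of $M$ (join = sum, meet = intersection), and $\Lambda^{fi}(M)$ is the set of fully invariant submodules $N$ (i.e. $f(N)\subseteq N$ for all $f\in\mathrm{End}_R(M)$). For $N,L\in\Lambda(M)$, $N_ML=\sum\{f(N)\mid f\in\mathrm{Hom}_R(M,L)\}$. $\sigma[M]$ is the full subcategory of left $R$-modules isomorphic to submodules of $M$-generated modules. A quasi-quantale is a complete lattice with an associative product $(a,b)\mapsto ab$ such that $(\bigvee X)a=\bigvee\{xa\mid x\in X\}$ and $a(\bigvee X)=\bigvee\{ax\mid x\in X\}$ for every directed (non-empty, upward-directed) subset $X$ and every element $a$. *)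

theory Defs
  imports "HOL-Algebra.Module"
begin

text \<open>HOL-Algebra's locale module requires a commutative ring, so we define left modules
  directly, reusing the record type of HOL-Algebra modules (its multiplicative fields are unused).\<close>

definition left_module :: "('r, 'x) ring_scheme \<Rightarrow> ('r, 'a, 'm) module_scheme \<Rightarrow> bool" where
  "left_module R M \<longleftrightarrow> ring R \<and> abelian_group M \<and>
     (\<forall>a\<in>carrier R. \<forall>x\<in>carrier M. a \<odot>\<^bsub>M\<^esub> x \<in> carrier M) \<and>
     (\<forall>a\<in>carrier R. \<forall>b\<in>carrier R. \<forall>x\<in>carrier M.
        (a \<oplus>\<^bsub>R\<^esub> b) \<odot>\<^bsub>M\<^esub> x = a \<odot>\<^bsub>M\<^esub> x \<oplus>\<^bsub>M\<^esub> b \<odot>\<^bsub>M\<^esub> x) \<and>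
     (\<forall>a\<in>carrier R. \<forall>x\<in>carrier M. \<forall>y\<in>carrier M.
        a \<odot>\<^bsub>M\<^esub> (x \<oplus>\<^bsub>M\<^esub> y) = a \<odot>\<^bsub>M\<^esub> x \<oplus>\<^bsub>M\<^esub> a \<odot>\<^bsub>M\<^esub> y) \<and>
     (\<forall>a\<in>carrier R. \<forall>b\<in>carrier R. \<forall>x\<in>carrier M.
        (a \<otimes>\<^bsub>R\<^esub> b) \<odot>\<^bsub>M\<^esub> x = a \<odot>\<^bsub>M\<^esub> (b \<odot>\<^bsub>M\<^esub> x)) \<and>
     (\<forall>x\<in>carrier M. \<one>\<^bsub>R\<^esub> \<odot>\<^bsub>M\<^esub> x = x)"

definition lsubmodule :: "('r, 'x) ring_scheme \<Rightarrow> ('r, 'a, 'm) module_scheme \<Rightarrow> 'a set \<Rightarrow> bool" where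
  "lsubmodule R M N \<longleftrightarrow> N \<subseteq> carrier M \<and> \<zero>\<^bsub>M\<^esub> \<in> N \<and>
     (\<forall>x\<in>N. \<forall>y\<in>N. x \<oplus>\<^bsub>M\<^esub> y \<in> N) \<and> (\<forall>x\<in>N. \<ominus>\<^bsub>M\<^esub> x \<in> N) \<and>
     (\<forall>a\<in>carrier R. \<forall>x\<in>N. a \<odot>\<^bsub>M\<^esub> x \<in> N)"

definition Lat :: "('r, 'x) ring_scheme \<Rightarrow> ('r, 'a, 'm) module_scheme \<Rightarrow> 'a set set" where
  "Lat R M = {N. lsubmodule R M N}"

definition lhom :: "('r, 'x) ring_scheme \<Rightarrow> ('r, 'a, 'm) module_scheme \<Rightarrow> ('r, 'b, 'n) module_scheme
    \<Rightarrow> ('a \<Rightarrow> 'b) set" where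
  "lhom R M N = {f. (\<forall>x\<in>carrier M. f x \<in> carrier N) \<and>
     (\<forall>x\<in>carrier M. \<forall>y\<in>carrier M. f (x \<oplus>\<^bsub>M\<^esub> y) = f x \<oplus>\<^bsub>N\<^esub> f y) \<and>
     (\<forall>a\<in>carrier R. \<forall>x\<in>carrier M. f (a \<odot>\<^bsub>M\<^esub> x) = a \<odot>\<^bsub>N\<^esub> f x)}"

definition lsum :: "('r, 'x) ring_scheme \<Rightarrow> ('r, 'a, 'm) module_scheme \<Rightarrow> 'a set set \<Rightarrow> 'a set" where
  "lsum R M S = \<Inter>{L. lsubmodule R M L \<and> \<Union>S \<subseteq> L}"

text \<open>The product N_M L = \<Sum>{f(N) | f \<in> Hom_R(M,L)}; a map M \<rightarrow> L is an
  endomorphism-shaped linear map M \<rightarrow> M with image inside L.\<close>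
definition mprod :: "('r, 'x) ring_scheme \<Rightarrow> ('r, 'a, 'm) module_scheme \<Rightarrow> 'a set \<Rightarrow> 'a set \<Rightarrow> 'a set" where
  "mprod R M N L = lsum R M {f ` N | f. f \<in> lhom R M M \<and> f ` carrier M \<subseteq> L}"

definition fully_invariant :: "('r, 'x) ring_scheme \<Rightarrow> ('r, 'a, 'm) module_scheme \<Rightarrow> 'a set \<Rightarrow> bool" where
  "fully_invariant R M N \<longleftrightarrow> lsubmodule R M N \<and> (\<forall>f\<in>lhom R M M. f ` N \<subseteq> N)"

definition Lat_fi :: "('r, 'x) ring_scheme \<Rightarrow> ('r, 'a, 'm) module_scheme \<Rightarrow> 'a set set" where
  "Lat_fi R M = {N. fully_invariant R M N}"

definition m_generated :: "('r, 'x) ring_scheme \<Rightarrow> ('r, 'a, 'm) module_scheme \<Rightarrow> ('r, 'b, 'n) module_scheme \<Rightarrow> bool" where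
  "m_generated R M X \<longleftrightarrow> left_module R X \<and>
     carrier X = lsum R X {f ` carrier M | f. f \<in> lhom R M X}"

type_synonym 'a univ = "('a \<Rightarrow> 'a) \<Rightarrow> 'a"

definition in_sigma :: "('r, 'x) ring_scheme \<Rightarrow> ('r, 'a, 'm) module_scheme \<Rightarrow> ('r, 'a univ) module \<Rightarrow> bool" where
  "in_sigma R M A \<longleftrightarrow> left_module R A \<and>
     (\<exists>X :: ('r, 'a univ) module. m_generated R M X \<and>
        (\<exists>e. e \<in> lhom R A X \<and> inj_on e (carrier A)))"

definition sigma_projective :: "('r, 'x) ring_scheme \<Rightarrow> ('r, 'a, 'm) module_scheme \<Rightarrow> bool" where
  "sigma_projective R M \<longleftrightarrow>
     (\<forall>(A :: ('r, 'a univ) module) (B :: ('r, 'a univ) module) g f.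
        in_sigma R M A \<and> in_sigma R M B \<and> g \<in> lhom R A B \<and> g ` carrier A = carrier B \<and>
        f \<in> lhom R M B \<longrightarrow>
        (\<exists>h \<in> lhom R M A. \<forall>x\<in>carrier M. g (h x) = f x))"

definition is_sup_in :: "'b set set \<Rightarrow> 'b set set \<Rightarrow> 'b set \<Rightarrow> bool" where
  "is_sup_in C X s \<longleftrightarrow> s \<in> C \<and> (\<forall>x\<in>X. x \<subseteq> s) \<and> (\<forall>t\<in>C. (\<forall>x\<in>X. x \<subseteq> t) \<longrightarrow> s \<subseteq> t)"

definition Sup_in :: "'b set set \<Rightarrow> 'b set set \<Rightarrow> 'b set" where
  "Sup_in C X = (THE s. is_sup_in C X s)"

definition directed_set :: "'b set set \<Rightarrow> bool" where
  "directed_set X \<longleftrightarrow> X \<noteq> {} \<and> (\<forall>x\<in>X. \<forall>y\<in>X. \<exists>z\<in>X. x \<subseteq> z \<and> y \<subseteq> z)"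

definition quasi_quantale :: "'b set set \<Rightarrow> ('b set \<Rightarrow> 'b set \<Rightarrow> 'b set) \<Rightarrow> bool" where
  "quasi_quantale C p \<longleftrightarrow>
     (\<forall>X. X \<subseteq> C \<longrightarrow> (\<exists>s. is_sup_in C X s)) \<and>
     (\<forall>a\<in>C. \<forall>b\<in>C. p a b \<in> C) \<and>
     (\<forall>a\<in>C. \<forall>b\<in>C. \<forall>c\<in>C. p (p a b) c = p a (p b c)) \<and>
     (\<forall>X a. X \<subseteq> C \<and> directed_set X \<and> a \<in> C \<longrightarrow>
        p (Sup_in C X) a = Sup_in C ((\<lambda>x. p x a) ` X) \<and>
        p a (Sup_in C X) = Sup_in C ((\<lambda>x. p a x) ` X))"

end

theory Submission
  imports Defs
begin


definition DS :: "('r, 'a, 'm) module_scheme \<Rightarrow> (('a \<Rightarrow> 'a) \<Rightarrow> 'a set) \<Rightarrow> ('r, 'a univ) module" where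
  "DS M Q = \<lparr>carrier = {\<phi>. (\<forall>k. \<phi> k \<in> Q k) \<and> finite {k. \<phi> k \<noteq> \<zero>\<^bsub>M\<^esub>}},
     mult = (\<lambda>\<phi> \<psi>. \<phi>), one = (\<lambda>k. \<zero>\<^bsub>M\<^esub>), zero = (\<lambda>k. \<zero>\<^bsub>M\<^esub>),
     add = (\<lambda>\<phi> \<psi> k. \<phi> k \<oplus>\<^bsub>M\<^esub> \<psi> k), smult = (\<lambda>a \<phi> k. a \<odot>\<^bsub>M\<^esub> \<phi> k)\<rparr>"

lemma DS_simps:
  "carrier (DS M Q) = {\<phi>. (\<forall>k. \<phi> k \<in> Q k) \<and> finite {k. \<phi> k \<noteq> \<zero>\<^bsub>M\<^esub>}}"
  "zero (DS M Q) = (\<lambda>k. \<zero>\<^bsub>M\<^esub>)"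
  "add (DS M Q) = (\<lambda>\<phi> \<psi> k. \<phi> k \<oplus>\<^bsub>M\<^esub> \<psi> k)"
  "smult (DS M Q) = (\<lambda>a \<phi> k. a \<odot>\<^bsub>M\<^esub> \<phi> k)"
  by (simp_all add: DS_def)


lemma Sup_in_eq: assumes "is_sup_in C X s" shows "Sup_in C X = s"
  unfolding Sup_in_def
proof (rule the_equality)
  show "is_sup_in C X s" by (rule assms)
  fix t assume "is_sup_in C X t"
  thus "t = s" using assms unfolding is_sup_in_def by (meson subset_antisym)
qed

locale lmod =
  fixes R :: "('r,'x) ring_scheme" and M :: "('r,'a,'m) module_scheme" (structure)
  assumes lm: "left_module R M"
begin

lemma ag: "abelian_group M" using lm unfolding left_module_def by auto
sublocale abelian_group M by (rule ag)
lemma rR: "ring R" using lm unfolding left_module_def by auto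
lemma sm_closed[simp, intro]: "a \<in> carrier R \<Longrightarrow> x \<in> carrier M \<Longrightarrow> a \<odot> x \<in> carrier M"
  using lm unfolding left_module_def by auto
lemma sm_radd: "a \<in> carrier R \<Longrightarrow> x \<in> carrier M \<Longrightarrow> y \<in> carrier M \<Longrightarrow> a \<odot> (x \<oplus> y) = a \<odot> x \<oplus> a \<odot> y"
  using lm unfolding left_module_def by auto
lemma sm_zero[simp]: "a \<in> carrier R \<Longrightarrow> a \<odot> \<zero> = \<zero>"
proof -
  assume a: "a \<in> carrier R"
  have "a \<odot> \<zero> = a \<odot> \<zero> \<oplus> a \<odot> \<zero>" using sm_radd[OF a, of \<zero> \<zero>] by simp
  thus ?thesis using a by (metis add.r_cancel_one sm_closed zero_closed)
qed

lemma hom_sm: "f \<in> lhom R M M \<Longrightarrow> a \<in> carrier R \<Longrightarrow> x \<in> carrier M \<Longrightarrow> f (a \<odot> x) = a \<odot> f x"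
  unfolding lhom_def by auto

lemma hom_closed: "f \<in> lhom R M M \<Longrightarrow> x \<in> carrier M \<Longrightarrow> f x \<in> carrier M"
  unfolding lhom_def by auto
lemma hom_add: "f \<in> lhom R M M \<Longrightarrow> x \<in> carrier M \<Longrightarrow> y \<in> carrier M \<Longrightarrow> f (x \<oplus> y) = f x \<oplus> f y"
  unfolding lhom_def by auto
lemma hom_zero: "f \<in> lhom R M M \<Longrightarrow> f \<zero> = \<zero>"
proof -
  assume f: "f \<in> lhom R M M"
  have c: "f \<zero> \<in> carrier M" using f unfolding lhom_def by auto
  have "f \<zero> = f (\<zero> \<oplus> \<zero>)" by simp
  also have "\<dots> = f \<zero> \<oplus> f \<zero>" by (rule hom_add[OF f zero_closed zero_closed])
  finally have "f \<zero> \<oplus> f \<zero> = f \<zero>" by simp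
  thus ?thesis using add.r_cancel_one[OF c c] by simp
qed

lemma hom_neg: "f \<in> lhom R M M \<Longrightarrow> x \<in> carrier M \<Longrightarrow> f (\<ominus> x) = \<ominus> f x"
proof -
  assume f: "f \<in> lhom R M M" and x: "x \<in> carrier M"
  have "f (\<ominus> x) \<oplus> f x = \<zero>" using hom_add[OF f, of "\<ominus> x" x] x hom_zero[OF f] by (simp add: l_neg)
  thus ?thesis using f x hom_closed by (metis a_inv_closed minus_equality)
qed

lemma hom_comp: "f \<in> lhom R M M \<Longrightarrow> g \<in> lhom R M M \<Longrightarrow> f \<circ> g \<in> lhom R M M"
  unfolding lhom_def by auto
lemma hom_id: "id \<in> lhom R M M"
  unfolding lhom_def by auto

lemma subD: assumes "lsubmodule R M N"
  shows "N \<subseteq> carrier M" "\<zero> \<in> N" "x \<in> N \<Longrightarrow> y \<in> N \<Longrightarrow> x \<oplus> y \<in> N"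
    "x \<in> N \<Longrightarrow> \<ominus> x \<in> N" "a \<in> carrier R \<Longrightarrow> x \<in> N \<Longrightarrow> a \<odot> x \<in> N"
  using assms unfolding lsubmodule_def by auto

lemma sub_carrier: "lsubmodule R M (carrier M)"
  unfolding lsubmodule_def by auto

lemma sub_lsum: "\<Union>S \<subseteq> carrier M \<Longrightarrow> lsubmodule R M (lsum R M S)"
  unfolding lsum_def lsubmodule_def using sub_carrier[unfolded lsubmodule_def]
  by (auto simp: Inter_iff)

lemma lsum_upper: "N \<in> S \<Longrightarrow> N \<subseteq> lsum R M S"
  unfolding lsum_def by auto

lemma lsum_least: "lsubmodule R M L \<Longrightarrow> \<Union>S \<subseteq> L \<Longrightarrow> lsum R M S \<subseteq> L"
  unfolding lsum_def by auto

lemma preimage_sub: assumes f: "f \<in> lhom R M M" and T: "lsubmodule R M T"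
  shows "lsubmodule R M {x \<in> carrier M. f x \<in> T}"
  using subD[OF T] hom_zero[OF f] hom_add[OF f] hom_neg[OF f] hom_sm[OF f]
  unfolding lsubmodule_def by auto

lemma sub_finsum: assumes T: "lsubmodule R M T" and F: "finite F"
  shows "(\<forall>j\<in>F. t j \<in> T) \<Longrightarrow> finsum M t F \<in> T"
  using F
proof (induction F rule: finite_induct)
  case empty thus ?case using subD[OF T] by simp
next
  case (insert j F)
  have "t \<in> F \<rightarrow> carrier M" "t j \<in> carrier M" using insert.prems subD(1)[OF T] by auto
  thus ?case using insert subD[OF T] by (simp add: finsum_insert)
qed


lemma Lat_iff: "N \<in> Lat R M \<longleftrightarrow> lsubmodule R M N" by (simp add: Lat_def)
lemma Lat_fi_Lat: "N \<in> Lat_fi R M \<Longrightarrow> N \<in> Lat R M"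
  by (simp add: Lat_fi_def Lat_def fully_invariant_def)

lemma lsum_Lat: "S \<subseteq> Lat R M \<Longrightarrow> lsum R M S \<in> Lat R M"
  using sub_lsum subD(1) unfolding Lat_def by blast

lemma sup_Lat: "S \<subseteq> Lat R M \<Longrightarrow> is_sup_in (Lat R M) S (lsum R M S)"
  unfolding is_sup_in_def using lsum_Lat lsum_upper lsum_least unfolding Lat_def
  by (metis (no_types, lifting) Union_least mem_Collect_eq)

lemma lsum_fi: assumes S: "S \<subseteq> Lat_fi R M" shows "lsum R M S \<in> Lat_fi R M"
proof -
  have sub: "lsubmodule R M (lsum R M S)" using lsum_Lat[of S] S Lat_fi_Lat by (auto simp: Lat_def)
  have "f ` lsum R M S \<subseteq> lsum R M S" if f: "f \<in> lhom R M M" for f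
  proof -
    let ?P = "{x \<in> carrier M. f x \<in> lsum R M S}"
    have P: "lsubmodule R M ?P" by (rule preimage_sub[OF f sub])
    have "\<Union>S \<subseteq> ?P"
    proof
      fix x assume "x \<in> \<Union>S"
      then obtain N where N: "N \<in> S" "x \<in> N" by auto
      have "N \<in> Lat_fi R M" using N S by auto
      hence "lsubmodule R M N" "f ` N \<subseteq> N" using f by (auto simp: Lat_fi_def fully_invariant_def)
      thus "x \<in> ?P" using N subD(1) lsum_upper[OF N(1)] by blast
    qed
    hence "lsum R M S \<subseteq> ?P" using lsum_least[OF P] by blast
    thus ?thesis by blast
  qed
  thus ?thesis using sub by (simp add: Lat_fi_def fully_invariant_def)
qed

lemma sup_Lat_fi: "S \<subseteq> Lat_fi R M \<Longrightarrow> is_sup_in (Lat_fi R M) S (lsum R M S)"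
  unfolding is_sup_in_def using lsum_fi lsum_upper lsum_least Lat_fi_Lat
  unfolding Lat_def by (metis (no_types, lifting) Union_least mem_Collect_eq)

lemma mprod_sub: "N \<subseteq> carrier M \<Longrightarrow> lsubmodule R M (mprod R M N L)"
  unfolding mprod_def by (rule sub_lsum) (auto dest: hom_closed)

lemma mprod_image: "f \<in> lhom R M M \<Longrightarrow> f ` carrier M \<subseteq> L \<Longrightarrow> f ` N \<subseteq> mprod R M N L"
  unfolding mprod_def by (rule lsum_upper) blast

lemma mprod_least: "lsubmodule R M T \<Longrightarrow> (\<And>f. f \<in> lhom R M M \<Longrightarrow> f ` carrier M \<subseteq> L \<Longrightarrow> f ` N \<subseteq> T)
  \<Longrightarrow> mprod R M N L \<subseteq> T"
  unfolding mprod_def by (rule lsum_least) auto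

lemma mprod_mono1: "N \<subseteq> N' \<Longrightarrow> N' \<subseteq> carrier M \<Longrightarrow> mprod R M N L \<subseteq> mprod R M N' L"
proof (rule mprod_least[OF mprod_sub])
  fix f assume "N \<subseteq> N'" "N' \<subseteq> carrier M" "f \<in> lhom R M M" "f ` carrier M \<subseteq> L"
  thus "f ` N \<subseteq> mprod R M N' L" using mprod_image[of f L N'] by blast
qed auto

lemma mprod_Lat: "N \<in> Lat R M \<Longrightarrow> mprod R M N L \<in> Lat R M"
  using mprod_sub subD(1) by (auto simp: Lat_def)

lemma mprod_family:
  assumes N: "\<forall>i\<in>I. N i \<in> Lat R M" and L: "L \<in> Lat R M"
  shows "mprod R M (lsum R M (N ` I)) L = lsum R M ((\<lambda>i. mprod R M (N i) L) ` I)"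
proof
  let ?T = "lsum R M ((\<lambda>i. mprod R M (N i) L) ` I)"
  have TL: "?T \<in> Lat R M" by (rule lsum_Lat) (use N mprod_Lat in auto)
  hence T: "lsubmodule R M ?T" by (simp add: Lat_def)
  have NS: "N ` I \<subseteq> Lat R M" using N by auto
  show "mprod R M (lsum R M (N ` I)) L \<subseteq> ?T"
  proof (rule mprod_least[OF T])
    fix f assume f: "f \<in> lhom R M M" "f ` carrier M \<subseteq> L"
    let ?P = "{x \<in> carrier M. f x \<in> ?T}"
    have P: "lsubmodule R M ?P" by (rule preimage_sub[OF f(1) T])
    have "\<Union>(N ` I) \<subseteq> ?P"
    proof
      fix x assume "x \<in> \<Union>(N ` I)"
      then obtain i where i: "i \<in> I" "x \<in> N i" by auto
      have "f x \<in> mprod R M (N i) L" using mprod_image[OF f, of "N i"] i by auto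
      moreover have "mprod R M (N i) L \<subseteq> ?T" by (rule lsum_upper) (use i in auto)
      moreover have "x \<in> carrier M" using N i subD(1) by (auto simp: Lat_def)
      ultimately show "x \<in> ?P" by auto
    qed
    thus "f ` lsum R M (N ` I) \<subseteq> ?T" using lsum_least[OF P] by blast
  qed
  show "?T \<subseteq> mprod R M (lsum R M (N ` I)) L"
  proof (rule lsum_least)
    show "lsubmodule R M (mprod R M (lsum R M (N ` I)) L)"
      using mprod_Lat[OF lsum_Lat[OF NS]] by (simp add: Lat_def)
    show "\<Union>((\<lambda>i. mprod R M (N i) L) ` I) \<subseteq> mprod R M (lsum R M (N ` I)) L"
    proof (clarsimp)
      fix i x assume i: "i \<in> I" and x: "x \<in> mprod R M (N i) L"
      have "mprod R M (N i) L \<subseteq> mprod R M (lsum R M (N ` I)) L"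
        apply (rule mprod_mono1)
        using lsum_upper[of "N i" "N ` I"] i apply blast
        using lsum_Lat[OF NS] subD(1) by (auto simp: Lat_def)
      thus "x \<in> mprod R M (lsum R M (N ` I)) L" using x by auto
    qed
  qed
qed

lemma mprod_fi: assumes N: "N \<subseteq> carrier M" and L: "L \<in> Lat_fi R M"
  shows "mprod R M N L \<in> Lat_fi R M"
proof -
  have sub: "lsubmodule R M (mprod R M N L)" by (rule mprod_sub[OF N])
  have "g ` mprod R M N L \<subseteq> mprod R M N L" if g: "g \<in> lhom R M M" for g
  proof -
    let ?P = "{x \<in> carrier M. g x \<in> mprod R M N L}"
    have P: "lsubmodule R M ?P" by (rule preimage_sub[OF g sub])
    have "mprod R M N L \<subseteq> ?P"
    proof (rule mprod_least[OF P])
      fix f assume f: "f \<in> lhom R M M" "f ` carrier M \<subseteq> L"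
      have gf: "g \<circ> f \<in> lhom R M M" by (rule hom_comp[OF g f(1)])
      have "g ` L \<subseteq> L" using L g by (auto simp: Lat_fi_def fully_invariant_def)
      hence "(g \<circ> f) ` carrier M \<subseteq> L" using f(2) by (auto simp: image_subset_iff)
      hence "(g \<circ> f) ` N \<subseteq> mprod R M N L" by (rule mprod_image[OF gf])
      thus "f ` N \<subseteq> ?P" using f(1) N hom_closed by auto
    qed
    thus ?thesis by blast
  qed
  thus ?thesis using sub by (simp add: Lat_fi_def fully_invariant_def)
qed

lemma mprod_unit: assumes N: "N \<in> Lat_fi R M" shows "mprod R M N (carrier M) = N"
proof
  have sub: "lsubmodule R M N" using N by (simp add: Lat_fi_def fully_invariant_def)
  show "mprod R M N (carrier M) \<subseteq> N"
    by (rule mprod_least[OF sub]) (use N in \<open>auto simp: Lat_fi_def fully_invariant_def\<close>)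
  show "N \<subseteq> mprod R M N (carrier M)"
    using mprod_image[OF hom_id, of "carrier M" N] by simp
qed

lemma assoc_le: assumes N: "N \<in> Lat R M" and L: "L \<in> Lat R M" and K: "K \<in> Lat R M"
  shows "mprod R M (mprod R M N L) K \<subseteq> mprod R M N (mprod R M L K)"
proof (rule mprod_least)
  let ?T = "mprod R M N (mprod R M L K)"
  show T: "lsubmodule R M ?T" using mprod_Lat[OF N] by (simp add: Lat_def)
  fix f assume f: "f \<in> lhom R M M" "f ` carrier M \<subseteq> K"
  let ?P = "{x \<in> carrier M. f x \<in> ?T}"
  have P: "lsubmodule R M ?P" by (rule preimage_sub[OF f(1) T])
  have "mprod R M N L \<subseteq> ?P"
  proof (rule mprod_least[OF P])
    fix g assume g: "g \<in> lhom R M M" "g ` carrier M \<subseteq> L"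
    have fg: "f \<circ> g \<in> lhom R M M" by (rule hom_comp[OF f(1) g(1)])
    have "f ` L \<subseteq> mprod R M L K" by (rule mprod_image[OF f])
    hence "(f \<circ> g) ` carrier M \<subseteq> mprod R M L K" using g(2) by (auto simp: image_subset_iff)
    hence "(f \<circ> g) ` N \<subseteq> ?T" by (rule mprod_image[OF fg])
    moreover have "N \<subseteq> carrier M" using N subD(1) by (auto simp: Lat_def)
    ultimately show "g ` N \<subseteq> ?P" using hom_closed[OF g(1)] by auto
  qed
  thus "f ` mprod R M N L \<subseteq> ?T" by blast
qed


lemma sm_ladd: "a \<in> carrier R \<Longrightarrow> b \<in> carrier R \<Longrightarrow> x \<in> carrier M \<Longrightarrow> (a \<oplus>\<^bsub>R\<^esub> b) \<odot> x = a \<odot> x \<oplus> b \<odot> x"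
  using lm unfolding left_module_def by auto
lemma sm_assoc: "a \<in> carrier R \<Longrightarrow> b \<in> carrier R \<Longrightarrow> x \<in> carrier M \<Longrightarrow> (a \<otimes>\<^bsub>R\<^esub> b) \<odot> x = a \<odot> (b \<odot> x)"
  using lm unfolding left_module_def by auto
lemma sm_one: "x \<in> carrier M \<Longrightarrow> \<one>\<^bsub>R\<^esub> \<odot> x = x"
  using lm unfolding left_module_def by auto

lemma supp_add: "{k. \<phi> k \<oplus> \<psi> k \<noteq> \<zero>} \<subseteq> {k. \<phi> k \<noteq> \<zero>} \<union> {k. \<psi> k \<noteq> \<zero>}"
  by auto

lemma DS_ag: assumes Q: "\<And>k. lsubmodule R M (Q k)" shows "abelian_group (DS M Q)"
proof (rule abelian_groupI, goal_cases)
  note QD = subD[OF Q]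
  have QC: "\<And>k x. x \<in> Q k \<Longrightarrow> x \<in> carrier M" using QD(1) by blast
  case (1 x y)
  thus ?case using QD(3) finite_subset[OF supp_add[of x y]] by (auto simp: DS_simps)
next
  case 2 thus ?case using subD(2)[OF Q] by (auto simp: DS_simps)
next
  case (3 x y z)
  have Q1: "\<And>k. Q k \<subseteq> carrier M" using subD(1)[OF Q] by blast
  hence "\<And>k. x k \<in> carrier M \<and> y k \<in> carrier M \<and> z k \<in> carrier M"
    using 3 unfolding DS_simps by blast
  thus ?case by (simp add: DS_simps a_assoc)
next
  case (4 x y)
  have Q1: "\<And>k. Q k \<subseteq> carrier M" using subD(1)[OF Q] by blast
  hence "\<And>k. x k \<in> carrier M \<and> y k \<in> carrier M"
    using 4 unfolding DS_simps by blast
  thus ?case by (simp add: DS_simps a_comm)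
next
  case (5 x)
  have Q1: "\<And>k. Q k \<subseteq> carrier M" using subD(1)[OF Q] by blast
  hence "\<And>k. x k \<in> carrier M"
    using 5 unfolding DS_simps by blast
  thus ?case by (simp add: DS_simps)
next
  case (6 x)
  have C: "\<And>k. x k \<in> carrier M" using 6 subD(1)[OF Q] by (auto simp: DS_simps)
  have "{k. \<ominus> x k \<noteq> \<zero>} \<subseteq> {k. x k \<noteq> \<zero>}" by auto
  hence "(\<lambda>k. \<ominus> x k) \<in> carrier (DS M Q)"
    using 6 subD(4)[OF Q] finite_subset by (auto simp: DS_simps)
  moreover have "(\<lambda>k. \<ominus> x k) \<oplus>\<^bsub>DS M Q\<^esub> x = \<zero>\<^bsub>DS M Q\<^esub>"
    using C by (simp add: DS_simps l_neg)
  ultimately show ?case by blast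
qed

lemma DS_lm: assumes Q: "\<And>k. lsubmodule R M (Q k)" shows "left_module R (DS M Q)"
proof -
  have C: "\<And>\<phi> k. \<phi> \<in> carrier (DS M Q) \<Longrightarrow> \<phi> k \<in> carrier M"
    using subD(1)[OF Q] by (auto simp: DS_simps)
  have sc: "a \<odot>\<^bsub>DS M Q\<^esub> \<phi> \<in> carrier (DS M Q)" if a: "a \<in> carrier R" and p: "\<phi> \<in> carrier (DS M Q)" for a \<phi>
  proof -
    have "{k. a \<odot> \<phi> k \<noteq> \<zero>} \<subseteq> {k. \<phi> k \<noteq> \<zero>}" using a by auto
    thus ?thesis using p a subD(5)[OF Q] finite_subset by (auto simp: DS_simps)
  qed
  show ?thesis unfolding left_module_def
    using rR DS_ag[OF Q] sc C
    by (auto simp: DS_simps sm_ladd sm_radd sm_assoc sm_one fun_eq_iff)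
qed

lemma DS_full_gen: "m_generated R M (DS M (\<lambda>_. carrier M))"
proof -
  let ?X = "DS M (\<lambda>_. carrier M)"
  have XL: "left_module R ?X" by (rule DS_lm) (rule sub_carrier)
  interpret X: lmod R ?X by unfold_locales (rule XL)
  let ?S = "{f ` carrier M | f. f \<in> lhom R M ?X}"
  have "\<Union>?S \<subseteq> carrier ?X" unfolding lhom_def by auto
  hence 1: "lsum R ?X ?S \<subseteq> carrier ?X" by (rule X.lsum_least[OF X.sub_carrier])
  have 2: "\<phi> \<in> lsum R ?X ?S" if p: "\<phi> \<in> carrier ?X" for \<phi>
  proof -
    have "\<phi> \<in> T" if T: "lsubmodule R ?X T" "\<Union>?S \<subseteq> T" for T
    proof -
      have iota: "(\<lambda>m k'. if k' = k then m else \<zero>) \<in> lhom R M ?X" for k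
      proof -
        have "finite {k'. (if k' = k then m else \<zero>) \<noteq> \<zero>}" for m
          by (rule finite_subset[of _ "{k}"]) auto
        thus ?thesis unfolding lhom_def by (auto simp: DS_simps fun_eq_iff)
      qed
      have ins: "(\<lambda>k'. if k' = k then m else \<zero>) \<in> T" if m: "m \<in> carrier M" for k m
        using T(2) iota[of k] m by blast
      have "\<forall>\<phi>. (\<forall>k. \<phi> k \<in> carrier M) \<and> {k. \<phi> k \<noteq> \<zero>} \<subseteq> F \<longrightarrow> \<phi> \<in> T" if F: "finite F" for F
        using F
      proof (induction F rule: finite_induct)
        case empty
        have z: "(\<lambda>k. \<zero>) \<in> T" using X.subD(2)[OF T(1)] by (simp add: DS_simps)
        show ?case
        proof (intro allI impI)
          fix \<phi> :: "('a \<Rightarrow> 'a) \<Rightarrow> 'a" assume "(\<forall>k. \<phi> k \<in> carrier M) \<and> {k. \<phi> k \<noteq> \<zero>} \<subseteq> {}"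
          hence "\<phi> = (\<lambda>k. \<zero>)" by auto
          thus "\<phi> \<in> T" using z by simp
        qed
      next
        case (insert k F)
        show ?case
        proof (intro allI impI)
          fix \<phi> assume h: "(\<forall>k. \<phi> k \<in> carrier M) \<and> {k. \<phi> k \<noteq> \<zero>} \<subseteq> insert k F"
          let ?a = "\<lambda>k'. if k' = k then \<phi> k else \<zero>"
          let ?b = "\<phi>(k := \<zero>)"
          have a: "?a \<in> T" using ins h by blast
          have "{k'. ?b k' \<noteq> \<zero>} \<subseteq> F" using h by auto
          moreover have "\<forall>k'. ?b k' \<in> carrier M" using h by simp
          ultimately have b: "?b \<in> T" using insert.IH by blast
          have "?a \<oplus>\<^bsub>?X\<^esub> ?b = \<phi>"
          proof (rule ext)
            fix k' show "(?a \<oplus>\<^bsub>?X\<^esub> ?b) k' = \<phi> k'"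
              using h by (cases "k' = k") (auto simp: DS_simps)
          qed
          thus "\<phi> \<in> T" using X.subD(3)[OF T(1) a b] by simp
        qed
      qed
      thus ?thesis using p by (auto simp: DS_simps)
    qed
    thus ?thesis unfolding lsum_def by blast
  qed
  show ?thesis unfolding m_generated_def using XL 1 2 by blast
qed

lemma DS_sigma: assumes Q: "\<And>k. lsubmodule R M (Q k)" shows "in_sigma R M (DS M Q)"
proof -
  have "id \<in> lhom R (DS M Q) (DS M (\<lambda>_. carrier M))"
    using subD(1)[OF Q] unfolding lhom_def by (auto simp: DS_simps)
  moreover have "left_module R (DS M Q)" by (rule DS_lm) (rule Q)
  ultimately show ?thesis unfolding in_sigma_def using DS_full_gen inj_on_id by blast
qed


lemma finsum_smult: assumes a: "a \<in> carrier R" and F: "finite F"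
  shows "t \<in> F \<rightarrow> carrier M \<Longrightarrow> a \<odot> finsum M t F = finsum M (\<lambda>j. a \<odot> t j) F"
  using F
proof (induction F rule: finite_induct)
  case empty thus ?case using a by simp
next
  case (insert j F)
  have t: "t \<in> F \<rightarrow> carrier M" "t j \<in> carrier M" using insert.prems by auto
  have t2: "(\<lambda>j. a \<odot> t j) \<in> F \<rightarrow> carrier M" "a \<odot> t j \<in> carrier M" using t a by auto
  have "a \<odot> finsum M t (insert j F) = a \<odot> (t j \<oplus> finsum M t F)"
    using insert t by (simp add: finsum_insert)
  also have "\<dots> = a \<odot> t j \<oplus> a \<odot> finsum M t F" using a t by (simp add: sm_radd finsum_closed)
  also have "\<dots> = a \<odot> t j \<oplus> finsum M (\<lambda>j. a \<odot> t j) F" using insert t by simp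
  also have "\<dots> = finsum M (\<lambda>j. a \<odot> t j) (insert j F)" using insert t2 by (simp add: finsum_insert)
  finally show ?case .
qed

lemma lift:
  fixes J :: "('a \<Rightarrow> 'a) set"
  assumes proj: "sigma_projective R M"
    and Q: "\<And>j. j \<in> J \<Longrightarrow> lsubmodule R M (Q j)"
    and u: "\<And>j. j \<in> J \<Longrightarrow> u j \<in> lhom R M M"
    and f: "f \<in> lhom R M M" "f ` carrier M \<subseteq> lsum R M ((\<lambda>j. u j ` Q j) ` J)"
  shows "\<exists>h. (\<forall>j\<in>J. h j \<in> lhom R M M \<and> h j ` carrier M \<subseteq> Q j) \<and>
     (\<forall>x\<in>carrier M. \<exists>F. finite F \<and> F \<subseteq> J \<and> f x = finsum M (\<lambda>j. u j (h j x)) F)"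
proof -
  define QA where "QA k = (if k \<in> J then Q k else {\<zero>})" for k :: "'a \<Rightarrow> 'a"
  define P where "P = lsum R M ((\<lambda>j. u j ` Q j) ` J)"
  define QB where "QB k = (if k = id then P else {\<zero>})" for k :: "'a \<Rightarrow> 'a"
  define A where "A = DS M QA"
  define B where "B = DS M QB"
  define S where "S \<phi> = finsum M (\<lambda>j. u j (\<phi> j)) {j. \<phi> j \<noteq> \<zero>}" for \<phi> :: "('a \<Rightarrow> 'a) \<Rightarrow> 'a"
  define g where "g \<phi> = (\<lambda>k::'a \<Rightarrow> 'a. if k = id then S \<phi> else \<zero>)" for \<phi>
  define f' where "f' x = (\<lambda>k::'a \<Rightarrow> 'a. if k = id then f x else \<zero>)" for x
  have sub0: "lsubmodule R M {\<zero>}" unfolding lsubmodule_def by auto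
  have QA: "\<And>k. lsubmodule R M (QA k)" using Q sub0 by (auto simp: QA_def)
  have Psub: "lsubmodule R M P" unfolding P_def
  proof (rule sub_lsum, clarsimp)
    fix j x assume "j \<in> J" "x \<in> Q j"
    thus "u j x \<in> carrier M" using Q u subD(1) hom_closed by blast
  qed
  have PC: "P \<subseteq> carrier M" by (rule subD(1)[OF Psub])
  have QB: "\<And>k. lsubmodule R M (QB k)" using Psub sub0 by (auto simp: QB_def)
  have carA: "\<phi> \<in> carrier A \<longleftrightarrow> (\<forall>k. \<phi> k \<in> QA k) \<and> finite {k. \<phi> k \<noteq> \<zero>}" for \<phi>
    by (simp add: A_def DS_simps)
  have carB: "\<phi> \<in> carrier B \<longleftrightarrow> (\<forall>k. \<phi> k \<in> QB k) \<and> finite {k. \<phi> k \<noteq> \<zero>}" for \<phi>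
    by (simp add: B_def DS_simps)
  have addA: "\<phi> \<oplus>\<^bsub>A\<^esub> \<psi> = (\<lambda>k. \<phi> k \<oplus> \<psi> k)" for \<phi> \<psi> by (simp add: A_def DS_simps)
  have addB: "\<phi> \<oplus>\<^bsub>B\<^esub> \<psi> = (\<lambda>k. \<phi> k \<oplus> \<psi> k)" for \<phi> \<psi> by (simp add: B_def DS_simps)
  have smA: "a \<odot>\<^bsub>A\<^esub> \<phi> = (\<lambda>k. a \<odot> \<phi> k)" for a \<phi> by (simp add: A_def DS_simps)
  have smB: "a \<odot>\<^bsub>B\<^esub> \<phi> = (\<lambda>k. a \<odot> \<phi> k)" for a \<phi> by (simp add: B_def DS_simps)
  have AL: "left_module R A" unfolding A_def by (rule DS_lm) (rule QA)
  interpret A: lmod R A by unfold_locales (rule AL)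
  have suppJ: "{k. \<phi> k \<noteq> \<zero>} \<subseteq> J" if p: "\<phi> \<in> carrier A" for \<phi>
  proof
    fix x assume x: "x \<in> {k. \<phi> k \<noteq> \<zero>}"
    have "\<phi> x \<in> QA x" using p carA by blast
    thus "x \<in> J" using x by (auto simp: QA_def split: if_splits)
  qed
  have suppF: "\<phi> \<in> carrier A \<Longrightarrow> finite {k. \<phi> k \<noteq> \<zero>}" for \<phi> by (auto simp: carA)
  have valC: "\<phi> \<in> carrier A \<Longrightarrow> j \<in> J \<Longrightarrow> \<phi> j \<in> Q j" for \<phi> j
    by (auto simp: carA QA_def) (metis)
  have valM: "\<phi> \<in> carrier A \<Longrightarrow> \<phi> j \<in> carrier M" for \<phi> j
    using QA subD(1) by (auto simp: carA)
  have termC: "\<phi> \<in> carrier A \<Longrightarrow> j \<in> J \<Longrightarrow> u j (\<phi> j) \<in> carrier M" for \<phi> j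
    using hom_closed[OF u] valM by blast
  have Sext: "S \<phi> = finsum M (\<lambda>j. u j (\<phi> j)) F"
    if p: "\<phi> \<in> carrier A" and F: "finite F" "{k. \<phi> k \<noteq> \<zero>} \<subseteq> F" "F \<subseteq> J" for \<phi> F
    unfolding S_def
  proof (rule add.finprod_mono_neutral_cong_left)
    show "finite F" "{k. \<phi> k \<noteq> \<zero>} \<subseteq> F" by (fact F)+
    show "\<And>i. i \<in> F - {k. \<phi> k \<noteq> \<zero>} \<Longrightarrow> u i (\<phi> i) = \<zero>" using hom_zero[OF u] F by auto
    show "(\<lambda>j. u j (\<phi> j)) \<in> F \<rightarrow> carrier M" using termC[OF p] F by auto
  qed simp
  have Sin: "S \<phi> \<in> P" if p: "\<phi> \<in> carrier A" for \<phi>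
    unfolding S_def
  proof (rule sub_finsum[OF Psub suppF[OF p]], intro ballI)
    fix j assume "j \<in> {j. \<phi> j \<noteq> \<zero>}"
    hence j: "j \<in> J" using suppJ[OF p] by auto
    have "u j (\<phi> j) \<in> u j ` Q j" using valC[OF p j] by auto
    thus "u j (\<phi> j) \<in> P" using lsum_upper[of "u j ` Q j" "(\<lambda>j. u j ` Q j) ` J"] j
      unfolding P_def by blast
  qed
  have Sadd: "S (\<phi> \<oplus>\<^bsub>A\<^esub> \<psi>) = S \<phi> \<oplus> S \<psi>" if p: "\<phi> \<in> carrier A" and q: "\<psi> \<in> carrier A" for \<phi> \<psi>
  proof -
    let ?F = "{k. \<phi> k \<noteq> \<zero>} \<union> {k. \<psi> k \<noteq> \<zero>}"
    have F: "finite ?F" "?F \<subseteq> J" using suppF[OF p] suppF[OF q] suppJ[OF p] suppJ[OF q] by auto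
    have pq: "\<phi> \<oplus>\<^bsub>A\<^esub> \<psi> \<in> carrier A" using A.a_closed p q by blast
    have "S (\<phi> \<oplus>\<^bsub>A\<^esub> \<psi>) = finsum M (\<lambda>j. u j ((\<phi> \<oplus>\<^bsub>A\<^esub> \<psi>) j)) ?F"
      by (rule Sext[OF pq F(1)]) (use F in \<open>auto simp: addA\<close>)
    also have "\<dots> = finsum M (\<lambda>j. u j (\<phi> j) \<oplus> u j (\<psi> j)) ?F"
    proof (rule add.finprod_cong')
      show "(\<lambda>j. u j (\<phi> j) \<oplus> u j (\<psi> j)) \<in> ?F \<rightarrow> carrier M"
        using F termC[OF p] termC[OF q] by auto
      show "\<And>j. j \<in> ?F \<Longrightarrow> u j ((\<phi> \<oplus>\<^bsub>A\<^esub> \<psi>) j) = u j (\<phi> j) \<oplus> u j (\<psi> j)"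
        using F hom_add[OF u] valM[OF p] valM[OF q] by (auto simp: addA)
    qed simp
    also have "\<dots> = finsum M (\<lambda>j. u j (\<phi> j)) ?F \<oplus> finsum M (\<lambda>j. u j (\<psi> j)) ?F"
      by (rule finsum_addf) (use F termC[OF p] termC[OF q] in auto)
    also have "\<dots> = S \<phi> \<oplus> S \<psi>"
      using Sext[OF p F(1)] Sext[OF q F(1)] F by auto
    finally show ?thesis .
  qed
  have Ssm: "S (a \<odot>\<^bsub>A\<^esub> \<phi>) = a \<odot> S \<phi>" if a: "a \<in> carrier R" and p: "\<phi> \<in> carrier A" for a \<phi>
  proof -
    let ?F = "{k. \<phi> k \<noteq> \<zero>}"
    have F: "finite ?F" "?F \<subseteq> J" using suppF[OF p] suppJ[OF p] by auto
    have ap: "a \<odot>\<^bsub>A\<^esub> \<phi> \<in> carrier A" using A.sm_closed a p by blast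
    have "S (a \<odot>\<^bsub>A\<^esub> \<phi>) = finsum M (\<lambda>j. u j ((a \<odot>\<^bsub>A\<^esub> \<phi>) j)) ?F"
      by (rule Sext[OF ap F(1)]) (use F a in \<open>auto simp: smA\<close>)
    also have "\<dots> = finsum M (\<lambda>j. a \<odot> u j (\<phi> j)) ?F"
    proof (rule add.finprod_cong')
      show "(\<lambda>j. a \<odot> u j (\<phi> j)) \<in> ?F \<rightarrow> carrier M"
        using F termC[OF p] a by auto
      show "\<And>j. j \<in> ?F \<Longrightarrow> u j ((a \<odot>\<^bsub>A\<^esub> \<phi>) j) = a \<odot> u j (\<phi> j)"
        using F hom_sm[OF u] valM[OF p] a by (auto simp: smA)
    qed simp
    also have "\<dots> = a \<odot> S \<phi>"
      unfolding S_def by (rule finsum_smult[OF a F(1), symmetric]) (use F termC[OF p] in auto)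
    finally show ?thesis .
  qed
  have z: "(\<lambda>k. \<zero>) \<in> carrier A" using QA subD(2) by (auto simp: carA)
  have S0: "S (\<lambda>k. \<zero>) = \<zero>" by (simp add: S_def)
  have Ssingle: "\<exists>\<phi>\<in>carrier A. S \<phi> = u j q" if j: "j \<in> J" and q: "q \<in> Q j" for j q
  proof -
    let ?p = "\<lambda>k. if k = j then q else \<zero>"
    have fin: "finite {k. ?p k \<noteq> \<zero>}" by (rule finite_subset[of _ "{j}"]) auto
    have "?p k \<in> QA k" for k
    proof (cases "k = j")
      case True thus ?thesis using j q by (simp add: QA_def)
    next
      case False thus ?thesis using subD(2)[OF QA] by simp
    qed
    hence p: "?p \<in> carrier A" using fin by (simp add: carA)
    have sj: "{k. ?p k \<noteq> \<zero>} \<subseteq> {j}" by auto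
    have "S ?p = finsum M (\<lambda>k. u k (?p k)) {j}" apply (rule Sext[OF p]) apply simp apply (rule sj) using j by simp
    also have "\<dots> = u j (?p j) \<oplus> finsum M (\<lambda>k. u k (?p k)) {}"
      by (rule finsum_insert) (use termC[OF p j] in auto)
    also have "\<dots> = u j q" using termC[OF p j] by simp
    finally have "S ?p = u j q" .
    thus ?thesis using p by (rule rev_bexI[rotated])
  qed
  have Sneg: "\<exists>\<psi>\<in>carrier A. S \<psi> = \<ominus> S \<phi>" if p: "\<phi> \<in> carrier A" for \<phi>
  proof -
    let ?q = "\<lambda>k. \<ominus> \<phi> k"
    have "{k. ?q k \<noteq> \<zero>} \<subseteq> {k. \<phi> k \<noteq> \<zero>}" by auto
    hence q: "?q \<in> carrier A" using p subD(4)[OF QA] finite_subset by (auto simp: carA)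
    have "\<phi> \<oplus>\<^bsub>A\<^esub> ?q = (\<lambda>k. \<zero>)" using valM[OF p] by (simp add: addA r_neg)
    hence "S \<phi> \<oplus> S ?q = \<zero>" using Sadd[OF p q] S0 by simp
    hence "S ?q \<oplus> S \<phi> = \<zero>" using Sin[OF p] Sin[OF q] PC by (simp add: a_comm subset_iff)
    hence "\<ominus> S \<phi> = S ?q" using Sin[OF p] Sin[OF q] PC by (metis minus_equality subsetD)
    thus ?thesis using q by metis
  qed
  have Im: "lsubmodule R M (S ` carrier A)"
    unfolding lsubmodule_def
  proof (intro conjI ballI)
    show "S ` carrier A \<subseteq> carrier M"
    proof
      fix y assume "y \<in> S ` carrier A"
      then obtain \<phi> where "\<phi> \<in> carrier A" "y = S \<phi>" by blast
      thus "y \<in> carrier M" using Sin PC by blast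
    qed
    show "\<zero> \<in> S ` carrier A" by (rule image_eqI[where f=S, OF S0[symmetric] z])
    show "x \<oplus> y \<in> S ` carrier A" if xy: "x \<in> S ` carrier A" "y \<in> S ` carrier A" for x y
    proof -
      obtain \<phi> \<psi> where p: "\<phi> \<in> carrier A" "x = S \<phi>" and q: "\<psi> \<in> carrier A" "y = S \<psi>"
        using xy by blast
      have "x \<oplus> y = S (\<phi> \<oplus>\<^bsub>A\<^esub> \<psi>)" using Sadd[OF p(1) q(1)] p q by simp
      moreover have "\<phi> \<oplus>\<^bsub>A\<^esub> \<psi> \<in> carrier A" using A.a_closed p q by blast
      ultimately show ?thesis by (rule image_eqI)
    qed
    show "\<ominus> x \<in> S ` carrier A" if xx: "x \<in> S ` carrier A" for x
    proof -
      obtain \<phi> where p: "\<phi> \<in> carrier A" "x = S \<phi>" using xx by blast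
      obtain \<psi> where q: "\<psi> \<in> carrier A" "S \<psi> = \<ominus> S \<phi>" using Sneg[OF p(1)] by blast
      have "\<ominus> x = S \<psi>" using p q by simp
      thus ?thesis using q(1) by (rule image_eqI)
    qed
    show "a \<odot> x \<in> S ` carrier A" if ax: "a \<in> carrier R" "x \<in> S ` carrier A" for a x
    proof -
      obtain \<phi> where p: "\<phi> \<in> carrier A" "x = S \<phi>" using ax(2) by blast
      have "a \<odot> x = S (a \<odot>\<^bsub>A\<^esub> \<phi>)" using Ssm[OF ax(1) p(1)] p by simp
      moreover have "a \<odot>\<^bsub>A\<^esub> \<phi> \<in> carrier A" using A.sm_closed ax(1) p by blast
      ultimately show ?thesis by (rule image_eqI)
    qed
  qed
  have PIm: "P \<subseteq> S ` carrier A" unfolding P_def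
  proof (rule lsum_least[OF Im], clarsimp)
    fix j q assume "j \<in> J" "q \<in> Q j"
    then obtain \<phi> where "\<phi> \<in> carrier A" "S \<phi> = u j q" using Ssingle by blast
    thus "u j q \<in> S ` carrier A" by (metis image_eqI)
  qed
  have gC: "g \<phi> \<in> carrier B" if p: "\<phi> \<in> carrier A" for \<phi>
  proof -
    have "{k. g \<phi> k \<noteq> \<zero>} \<subseteq> {id}" by (auto simp: g_def)
    hence "finite {k. g \<phi> k \<noteq> \<zero>}" by (rule finite_subset) simp
    moreover have "g \<phi> k \<in> QB k" for k
    proof (cases "k = id")
      case True thus ?thesis using Sin[OF p] by (simp add: g_def QB_def)
    next
      case False thus ?thesis by (simp add: g_def QB_def)
    qed
    ultimately show ?thesis by (simp add: carB)
  qed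
  have g: "g \<in> lhom R A B" unfolding lhom_def
  proof (intro CollectI conjI ballI)
    show "g x \<in> carrier B" if "x \<in> carrier A" for x using gC that .
    show "g (x \<oplus>\<^bsub>A\<^esub> y) = g x \<oplus>\<^bsub>B\<^esub> g y" if xy: "x \<in> carrier A" "y \<in> carrier A" for x y
    proof (rule ext)
      fix k show "g (x \<oplus>\<^bsub>A\<^esub> y) k = (g x \<oplus>\<^bsub>B\<^esub> g y) k"
        using Sadd[OF xy] by (cases "k = id") (simp_all add: g_def addB)
    qed
    show "g (a \<odot>\<^bsub>A\<^esub> x) = a \<odot>\<^bsub>B\<^esub> g x" if ax: "a \<in> carrier R" "x \<in> carrier A" for a x
    proof (rule ext)
      fix k show "g (a \<odot>\<^bsub>A\<^esub> x) k = (a \<odot>\<^bsub>B\<^esub> g x) k"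
        using Ssm[OF ax] ax(1) by (cases "k = id") (simp_all add: g_def smB)
    qed
  qed
  have gs: "g ` carrier A = carrier B"
  proof
    show "g ` carrier A \<subseteq> carrier B" by (rule image_subsetI, rule gC)
    show "carrier B \<subseteq> g ` carrier A"
    proof
      fix \<psi> assume b: "\<psi> \<in> carrier B"
      have bk: "\<psi> k \<in> QB k" for k using b by (simp add: carB)
      have "\<psi> id \<in> P" using bk[of id] by (simp add: QB_def)
      hence "\<psi> id \<in> S ` carrier A" using PIm by (rule rev_subsetD)
      then obtain \<phi> where p: "\<phi> \<in> carrier A" "\<psi> id = S \<phi>" by (rule imageE)
      have "g \<phi> = \<psi>"
      proof (rule ext)
        fix k show "g \<phi> k = \<psi> k"
        proof (cases "k = id")
          case True thus ?thesis using p(2) by (simp add: g_def)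
        next
          case False
          hence "\<psi> k = \<zero>" using bk[of k] by (simp add: QB_def)
          thus ?thesis using False by (simp add: g_def)
        qed
      qed
      thus "\<psi> \<in> g ` carrier A" by (rule image_eqI[OF sym p(1)])
    qed
  qed
  have f'C: "f' x \<in> carrier B" if x: "x \<in> carrier M" for x
  proof -
    have "{k. f' x k \<noteq> \<zero>} \<subseteq> {id}" by (auto simp: f'_def)
    hence "finite {k. f' x k \<noteq> \<zero>}" by (rule finite_subset) simp
    moreover have fP: "f x \<in> P" using f(2) x unfolding P_def by blast
    moreover have "f' x k \<in> QB k" for k
    proof (cases "k = id")
      case True thus ?thesis using fP by (simp add: f'_def QB_def)
    next
      case False thus ?thesis by (simp add: f'_def QB_def)
    qed
    ultimately show ?thesis by (simp add: carB)
  qed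
  have f': "f' \<in> lhom R M B" unfolding lhom_def
  proof (intro CollectI conjI ballI)
    show "f' x \<in> carrier B" if "x \<in> carrier M" for x using f'C that .
    show "f' (x \<oplus> y) = f' x \<oplus>\<^bsub>B\<^esub> f' y" if xy: "x \<in> carrier M" "y \<in> carrier M" for x y
    proof (rule ext)
      fix k show "f' (x \<oplus> y) k = (f' x \<oplus>\<^bsub>B\<^esub> f' y) k"
        using hom_add[OF f(1) xy] by (cases "k = id") (simp_all add: f'_def addB)
    qed
    show "f' (a \<odot> x) = a \<odot>\<^bsub>B\<^esub> f' x" if ax: "a \<in> carrier R" "x \<in> carrier M" for a x
    proof (rule ext)
      fix k show "f' (a \<odot> x) k = (a \<odot>\<^bsub>B\<^esub> f' x) k"
        using hom_sm[OF f(1) ax] ax(1) by (cases "k = id") (simp_all add: f'_def smB)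
    qed
  qed
  have sA: "in_sigma R M A" unfolding A_def by (rule DS_sigma) (rule QA)
  have sB: "in_sigma R M B" unfolding B_def by (rule DS_sigma) (rule QB)
  have "\<exists>h\<in>lhom R M A. \<forall>x\<in>carrier M. g (h x) = f' x"
    by (rule proj[unfolded sigma_projective_def, rule_format, of A B g f']) (use sA sB g gs f' in simp)
  then obtain h where h: "h \<in> lhom R M A" "\<And>x. x \<in> carrier M \<Longrightarrow> g (h x) = f' x"
    by blast
  have hC: "x \<in> carrier M \<Longrightarrow> h x \<in> carrier A" for x using h(1) unfolding lhom_def by blast
  have Sh: "S (h x) = f x" if x: "x \<in> carrier M" for x
  proof -
    have "g (h x) id = f' x id" using h(2)[OF x] by simp
    thus ?thesis by (simp add: g_def f'_def)
  qed
  define hh where "hh j x = h x j" for j x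
  have "\<forall>j\<in>J. hh j \<in> lhom R M M \<and> hh j ` carrier M \<subseteq> Q j"
  proof
    fix j assume j: "j \<in> J"
    have "hh j \<in> lhom R M M" unfolding lhom_def
    proof (intro CollectI conjI ballI)
      show "hh j x \<in> carrier M" if "x \<in> carrier M" for x using valM[OF hC[OF that]] by (simp add: hh_def)
      show "hh j (x \<oplus> y) = hh j x \<oplus> hh j y" if xy: "x \<in> carrier M" "y \<in> carrier M" for x y
      proof -
        have "h (x \<oplus> y) = h x \<oplus>\<^bsub>A\<^esub> h y" using h(1) xy unfolding lhom_def by blast
        thus ?thesis by (simp add: hh_def addA)
      qed
      show "hh j (a \<odot> x) = a \<odot> hh j x" if ax: "a \<in> carrier R" "x \<in> carrier M" for a x
      proof -
        have "h (a \<odot> x) = a \<odot>\<^bsub>A\<^esub> h x" using h(1) ax unfolding lhom_def by blast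
        thus ?thesis by (simp add: hh_def smA)
      qed
    qed
    moreover have "hh j ` carrier M \<subseteq> Q j"
    proof (rule image_subsetI)
      fix x assume "x \<in> carrier M"
      thus "hh j x \<in> Q j" using valC[OF hC j] by (simp add: hh_def)
    qed
    ultimately show "hh j \<in> lhom R M M \<and> hh j ` carrier M \<subseteq> Q j" by blast
  qed
  moreover have "\<forall>x\<in>carrier M. \<exists>F. finite F \<and> F \<subseteq> J \<and> f x = finsum M (\<lambda>j. u j (hh j x)) F"
  proof
    fix x assume x: "x \<in> carrier M"
    have "f x = finsum M (\<lambda>j. u j (hh j x)) {k. h x k \<noteq> \<zero>}" using Sh[OF x] by (simp add: S_def hh_def)
    thus "\<exists>F. finite F \<and> F \<subseteq> J \<and> f x = finsum M (\<lambda>j. u j (hh j x)) F"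
      using suppF[OF hC[OF x]] suppJ[OF hC[OF x]] by blast
  qed
  ultimately show ?thesis by blast
qed


lemma lift_sub:
  fixes J :: "('a \<Rightarrow> 'a) set"
  assumes proj: "sigma_projective R M"
    and Q: "\<And>j. j \<in> J \<Longrightarrow> lsubmodule R M (Q j)"
    and u: "\<And>j. j \<in> J \<Longrightarrow> u j \<in> lhom R M M"
    and f: "f \<in> lhom R M M" "f ` carrier M \<subseteq> lsum R M ((\<lambda>j. u j ` Q j) ` J)"
    and T: "lsubmodule R M T" and N: "N \<subseteq> carrier M"
    and H: "\<And>h j x. h \<in> lhom R M M \<Longrightarrow> h ` carrier M \<subseteq> Q j \<Longrightarrow> j \<in> J \<Longrightarrow> x \<in> N \<Longrightarrow> u j (h x) \<in> T"
  shows "f ` N \<subseteq> T"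
proof -
  obtain h where h: "\<forall>j\<in>J. h j \<in> lhom R M M \<and> h j ` carrier M \<subseteq> Q j"
    "\<forall>x\<in>carrier M. \<exists>F. finite F \<and> F \<subseteq> J \<and> f x = finsum M (\<lambda>j. u j (h j x)) F"
    using lift[OF proj Q u f] by blast
  show ?thesis
  proof (rule image_subsetI)
    fix x assume x: "x \<in> N"
    then obtain F where F: "finite F" "F \<subseteq> J" "f x = finsum M (\<lambda>j. u j (h j x)) F"
      using h(2) N by blast
    have "finsum M (\<lambda>j. u j (h j x)) F \<in> T"
    proof (rule sub_finsum[OF T F(1)], intro ballI)
      fix j assume "j \<in> F"
      hence j: "j \<in> J" using F by blast
      show "u j (h j x) \<in> T" using H[of "h j" j x] h(1) j x by blast
    qed
    thus "f x \<in> T" using F by simp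
  qed
qed

lemma assoc_ge: assumes proj: "sigma_projective R M"
  and N: "N \<in> Lat R M" and L: "L \<in> Lat R M" and K: "K \<in> Lat R M"
  shows "mprod R M N (mprod R M L K) \<subseteq> mprod R M (mprod R M N L) K"
proof (rule mprod_least)
  let ?T = "mprod R M (mprod R M N L) K"
  have NL: "mprod R M N L \<in> Lat R M" by (rule mprod_Lat[OF N])
  show T: "lsubmodule R M ?T" using mprod_Lat[OF NL] by (simp add: Lat_def)
  fix f assume f: "f \<in> lhom R M M" "f ` carrier M \<subseteq> mprod R M L K"
  let ?J = "{g. g \<in> lhom R M M \<and> g ` carrier M \<subseteq> K}"
  have eq: "{g ` L | g. g \<in> lhom R M M \<and> g ` carrier M \<subseteq> K} = (\<lambda>j. id j ` (\<lambda>_. L) j) ` ?J"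
    by auto
  show "f ` N \<subseteq> ?T"
  proof (rule lift_sub[OF proj, where Q="\<lambda>_. L" and u=id and J="?J"])
    show "lsubmodule R M L" for j using L by (simp add: Lat_def)
    show "id j \<in> lhom R M M" if "j \<in> ?J" for j using that by simp
    show "f \<in> lhom R M M" by (rule f(1))
    show "f ` carrier M \<subseteq> lsum R M ((\<lambda>j. id j ` L) ` ?J)"
      using f(2) eq unfolding mprod_def by simp
    show "lsubmodule R M ?T" by (rule T)
    show "N \<subseteq> carrier M" using N subD(1) by (simp add: Lat_def)
    fix h j x assume h: "h \<in> lhom R M M" "h ` carrier M \<subseteq> L" and j: "j \<in> ?J" and x: "x \<in> N"
    have "h x \<in> mprod R M N L" using mprod_image[OF h] x by blast
    hence "j (h x) \<in> j ` mprod R M N L" by blast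
    moreover have "j ` mprod R M N L \<subseteq> ?T" using j by (intro mprod_image) auto
    ultimately show "id j (h x) \<in> ?T" by auto
  qed
qed

lemma mprod_mono2: "L \<subseteq> L' \<Longrightarrow> N \<subseteq> carrier M \<Longrightarrow> mprod R M N L \<subseteq> mprod R M N L'"
proof (rule mprod_least[OF mprod_sub])
  fix f assume "L \<subseteq> L'" "N \<subseteq> carrier M" "f \<in> lhom R M M" "f ` carrier M \<subseteq> L"
  thus "f ` N \<subseteq> mprod R M N L'" using mprod_image[of f L' N] by blast
qed auto

lemma right_distrib: assumes proj: "sigma_projective R M"
  and a: "a \<in> Lat R M" and X: "X \<subseteq> Lat R M"
  shows "mprod R M a (lsum R M X) = lsum R M ((\<lambda>x. mprod R M a x) ` X)"
proof -
  let ?T = "lsum R M ((\<lambda>x. mprod R M a x) ` X)"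
  have TL: "?T \<in> Lat R M" by (rule lsum_Lat) (use X mprod_Lat[OF a] in auto)
  hence T: "lsubmodule R M ?T" by (simp add: Lat_def)
  have aC: "a \<subseteq> carrier M" using a subD(1) by (simp add: Lat_def)
  have LL: "mprod R M a (lsum R M X) \<in> Lat R M" by (rule mprod_Lat[OF a])
  have ge: "?T \<subseteq> mprod R M a (lsum R M X)"
  proof (rule lsum_least)
    show "lsubmodule R M (mprod R M a (lsum R M X))" using LL by (simp add: Lat_def)
    show "\<Union>((\<lambda>x. mprod R M a x) ` X) \<subseteq> mprod R M a (lsum R M X)"
      using mprod_mono2[OF lsum_upper aC] by blast
  qed
  show ?thesis
  proof (cases "\<exists>y1 y2::'a. y1 \<noteq> y2")
    case False
    hence all: "\<And>A::'a set. \<zero> \<in> A \<Longrightarrow> A = UNIV" by (metis UNIV_eq_I)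
    have "mprod R M a (lsum R M X) = UNIV" using LL subD(2) all by (simp add: Lat_def)
    moreover have "?T = UNIV" using T subD(2) all by simp
    ultimately show ?thesis by simp
  next
    case True
    then obtain y1 y2 :: 'a where y: "y1 \<noteq> y2" by blast
    define c where "c L = (\<lambda>x. if x \<in> L then y1 else y2)" for L :: "'a set"
    have cinj: "inj c"
    proof (rule injI)
      fix L1 L2 assume "c L1 = c L2"
      hence "\<And>x. (if x \<in> L1 then y1 else y2) = (if x \<in> L2 then y1 else y2)"
        unfolding c_def by metis
      thus "L1 = L2" using y by (metis (full_types) subsetI subset_antisym)
    qed
    let ?J = "c ` X"
    let ?Q = "inv_into X c"
    have Qc: "\<And>L. L \<in> X \<Longrightarrow> ?Q (c L) = L" using cinj by (simp add: inv_into_f_f inj_on_subset)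
    have QJ: "\<And>j. j \<in> ?J \<Longrightarrow> ?Q j \<in> X" using Qc by auto
    have eq: "(\<lambda>j. id ` ?Q j) ` ?J = X"
    proof
      show "(\<lambda>j. id ` ?Q j) ` ?J \<subseteq> X" using QJ by auto
      show "X \<subseteq> (\<lambda>j. id ` ?Q j) ` ?J"
      proof
        fix L assume "L \<in> X"
        hence "L = id ` ?Q (c L)" using Qc by simp
        thus "L \<in> (\<lambda>j. id ` ?Q j) ` ?J" using \<open>L \<in> X\<close> by blast
      qed
    qed
    have le: "mprod R M a (lsum R M X) \<subseteq> ?T"
    proof (rule mprod_least[OF T])
      fix f assume f: "f \<in> lhom R M M" "f ` carrier M \<subseteq> lsum R M X"
      show "f ` a \<subseteq> ?T"
      proof (rule lift_sub[OF proj, where Q="?Q" and u="\<lambda>_. id" and J="?J"])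
        show "lsubmodule R M (?Q j)" if "j \<in> ?J" for j using QJ[OF that] X by (auto simp: Lat_def)
        show "id \<in> lhom R M M" for j by (rule hom_id)
        show "f \<in> lhom R M M" by (rule f(1))
        show "f ` carrier M \<subseteq> lsum R M ((\<lambda>j. id ` ?Q j) ` ?J)" using f(2) eq by simp
        show "lsubmodule R M ?T" by (rule T)
        show "a \<subseteq> carrier M" by (rule aC)
        fix h j x assume h: "h \<in> lhom R M M" "h ` carrier M \<subseteq> ?Q j" and j: "j \<in> ?J" and x: "x \<in> a"
        have "h x \<in> mprod R M a (?Q j)" using mprod_image[OF h] x by blast
        moreover have "mprod R M a (?Q j) \<subseteq> ?T" using QJ[OF j] by (intro lsum_upper) blast
        ultimately show "id (h x) \<in> ?T" by auto
      qed
    qed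
    show ?thesis using le ge by (rule subset_antisym)
  qed
qed

end

theorem proposition4p3:
  fixes R :: "('r, 'x) ring_scheme" and M :: "('r, 'a, 'm) module_scheme"
  assumes "left_module R M" and "sigma_projective R M"
  shows "quasi_quantale (Lat R M) (mprod R M) \<and>
    (\<forall>(N :: 'i \<Rightarrow> 'a set) I L. (\<forall>i\<in>I. N i \<in> Lat R M) \<and> L \<in> Lat R M \<longrightarrow>
        mprod R M (lsum R M (N ` I)) L = lsum R M ((\<lambda>i. mprod R M (N i) L) ` I))
   \<and> quasi_quantale (Lat_fi R M) (mprod R M) \<and>
    (\<forall>S. S \<subseteq> Lat_fi R M \<longrightarrow> lsum R M S \<in> Lat_fi R M) \<and>
    (\<forall>N\<in>Lat_fi R M. \<forall>L\<in>Lat_fi R M. mprod R M N L \<in> Lat_fi R M) \<and>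
    (\<forall>N\<in>Lat_fi R M. mprod R M N (carrier M) = N)"
proof -
  interpret lmod R M by unfold_locales (rule assms(1))
  note proj = assms(2)
  have SupL: "Sup_in (Lat R M) X = lsum R M X" if "X \<subseteq> Lat R M" for X
    by (rule Sup_in_eq[OF sup_Lat[OF that]])
  have SupF: "Sup_in (Lat_fi R M) X = lsum R M X" if "X \<subseteq> Lat_fi R M" for X
    by (rule Sup_in_eq[OF sup_Lat_fi[OF that]])
  have assoc: "mprod R M (mprod R M a b) c = mprod R M a (mprod R M b c)"
    if "a \<in> Lat R M" "b \<in> Lat R M" "c \<in> Lat R M" for a b c
    using assoc_le[OF that] assoc_ge[OF proj that] by (rule subset_antisym)
  have left: "mprod R M (lsum R M X) a = lsum R M ((\<lambda>x. mprod R M x a) ` X)"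
    if "X \<subseteq> Lat R M" "a \<in> Lat R M" for X a
    using mprod_family[of X "\<lambda>x. x" a] that by auto
  have Q1: "quasi_quantale (Lat R M) (mprod R M)"
    unfolding quasi_quantale_def
  proof (intro conjI allI ballI impI)
    show "\<exists>s. is_sup_in (Lat R M) X s" if "X \<subseteq> Lat R M" for X using sup_Lat[OF that] by blast
    show "mprod R M a b \<in> Lat R M" if "a \<in> Lat R M" "b \<in> Lat R M" for a b using mprod_Lat that by blast
    show "mprod R M (mprod R M a b) c = mprod R M a (mprod R M b c)"
      if "a \<in> Lat R M" "b \<in> Lat R M" "c \<in> Lat R M" for a b c using assoc[OF that] .
    fix X a assume H: "X \<subseteq> Lat R M \<and> directed_set X \<and> a \<in> Lat R M"
    hence X: "X \<subseteq> Lat R M" and a: "a \<in> Lat R M" by auto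
    have i1: "(\<lambda>x. mprod R M x a) ` X \<subseteq> Lat R M" using X mprod_Lat by blast
    have i2: "(\<lambda>x. mprod R M a x) ` X \<subseteq> Lat R M" using a mprod_Lat by blast
    show "mprod R M (Sup_in (Lat R M) X) a = Sup_in (Lat R M) ((\<lambda>x. mprod R M x a) ` X)"
      using left[OF X a] SupL[OF X] SupL[OF i1] by simp
    show "mprod R M a (Sup_in (Lat R M) X) = Sup_in (Lat R M) ((\<lambda>x. mprod R M a x) ` X)"
      using right_distrib[OF proj a X] SupL[OF X] SupL[OF i2] by simp
  qed
  have Q2: "quasi_quantale (Lat_fi R M) (mprod R M)"
    unfolding quasi_quantale_def
  proof (intro conjI allI ballI impI)
    show "\<exists>s. is_sup_in (Lat_fi R M) X s" if "X \<subseteq> Lat_fi R M" for X using sup_Lat_fi[OF that] by blast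
    show "mprod R M a b \<in> Lat_fi R M" if "a \<in> Lat_fi R M" "b \<in> Lat_fi R M" for a b
      using mprod_fi[OF _ that(2)] that(1) Lat_fi_Lat subD(1) by (auto simp: Lat_def)
    show "mprod R M (mprod R M a b) c = mprod R M a (mprod R M b c)"
      if "a \<in> Lat_fi R M" "b \<in> Lat_fi R M" "c \<in> Lat_fi R M" for a b c
      using assoc Lat_fi_Lat that by blast
    fix X a assume H: "X \<subseteq> Lat_fi R M \<and> directed_set X \<and> a \<in> Lat_fi R M"
    hence X: "X \<subseteq> Lat_fi R M" and a: "a \<in> Lat_fi R M" by auto
    have XL: "X \<subseteq> Lat R M" and aL: "a \<in> Lat R M" using X a Lat_fi_Lat by auto
    have aC: "a \<subseteq> carrier M" using aL subD(1) by (simp add: Lat_def)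
    have i1: "(\<lambda>x. mprod R M x a) ` X \<subseteq> Lat_fi R M"
    proof (rule image_subsetI)
      fix x assume "x \<in> X"
      hence "x \<subseteq> carrier M" using XL subD(1) by (auto simp: Lat_def)
      thus "mprod R M x a \<in> Lat_fi R M" using mprod_fi a by blast
    qed
    have i2: "(\<lambda>x. mprod R M a x) ` X \<subseteq> Lat_fi R M" using mprod_fi[OF aC] X by blast
    show "mprod R M (Sup_in (Lat_fi R M) X) a = Sup_in (Lat_fi R M) ((\<lambda>x. mprod R M x a) ` X)"
      using left[OF XL aL] SupF[OF X] SupF[OF i1] by simp
    show "mprod R M a (Sup_in (Lat_fi R M) X) = Sup_in (Lat_fi R M) ((\<lambda>x. mprod R M a x) ` X)"
      using right_distrib[OF proj aL XL] SupF[OF X] SupF[OF i2] by simp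
  qed
  have F: "\<forall>(N :: 'i \<Rightarrow> 'a set) I L. (\<forall>i\<in>I. N i \<in> Lat R M) \<and> L \<in> Lat R M \<longrightarrow>
        mprod R M (lsum R M (N ` I)) L = lsum R M ((\<lambda>i. mprod R M (N i) L) ` I)"
    using mprod_family by blast
  have S: "\<forall>S. S \<subseteq> Lat_fi R M \<longrightarrow> lsum R M S \<in> Lat_fi R M" using lsum_fi by blast
  have P: "\<forall>N\<in>Lat_fi R M. \<forall>L\<in>Lat_fi R M. mprod R M N L \<in> Lat_fi R M"
    using mprod_fi Lat_fi_Lat subD(1) by (auto simp: Lat_def)
  have U: "\<forall>N\<in>Lat_fi R M. mprod R M N (carrier M) = N" using mprod_unit by blast
  show ?thesis using Q1 F Q2 S P U by blast
qed

end
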